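(* Let $\Gamma$ be a non-elementary Fuchsian group and $\hat\Gamma=\{\hat\gamma:\gamma\in\Gamma\}$, where $\hat\gamma(z,w)=(\gamma(z),\gamma(w))$. Then every holomorphic function $F:G\to\mathbb{C}$ with $F\circ\hat\gamma=F$ for all $\gamma\in\Gamma$ is constant.
   Context: $\mathbb{H}=\{z\in\mathbb{C}:\operatorname{Im}z>0\}$; $\hat{\mathbb{C}}=\mathbb{C}\cup\{\infty\}$; $G=\hat{\mathbb{C}}^2\setminus\{(z,z):z\in\hat{\mathbb{C}}\}$. A Fuchsian group is a discrete subgroup of the group of conformal automorphisms of $\mathbb{H}$ (real Möbius transformations, acting on $\hat{\mathbb{C}}$). Its limit set $\Lambda(\Gamma)\subseteq\mathbb{R}\cup\{\infty\}$ is the set of accumulation points of the orbit $\Gamma z$ of a point $z\in\mathbb{H}$ (independent of $z$). $\Gamma$ is elementary if $\Lambda(\Gamma)$ has at most two points, and non-elementary otherwise. *)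

theory Defs
  imports "HOL-Analysis.Analysis"
begin

text \<open>The Riemann sphere: \<open>None\<close> is the point at infinity.\<close>
type_synonym csphere = "complex option"

definition G_dom :: "(csphere \<times> csphere) set" where
  "G_dom = {(z, w). z \<noteq> w}"

definition moebius_act :: "real^2^2 \<Rightarrow> csphere \<Rightarrow> csphere" where
  "moebius_act A p =
     (let a = complex_of_real (A$1$1); b = complex_of_real (A$1$2);
          c = complex_of_real (A$2$1); d = complex_of_real (A$2$2)
      in case p of
           None \<Rightarrow> (if c = 0 then None else Some (a / c))
         | Some z \<Rightarrow> (if c * z + d = 0 then None else Some ((a * z + b) / (c * z + d))))"

text \<open>Fuchsian group: a discrete subgroup of SL(2,R) (acting via Moebius maps;
  equivalently, via the projection, a discrete subgroup of PSL(2,R) = Aut(H)).\<close>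
definition fuchsian :: "(real^2^2) set \<Rightarrow> bool" where
  "fuchsian \<Gamma> \<longleftrightarrow>
     (\<forall>A\<in>\<Gamma>. det A = 1) \<and> mat 1 \<in> \<Gamma> \<and>
     (\<forall>A\<in>\<Gamma>. \<forall>B\<in>\<Gamma>. A ** B \<in> \<Gamma>) \<and> (\<forall>A\<in>\<Gamma>. matrix_inv A \<in> \<Gamma>) \<and>
     (\<forall>A\<in>\<Gamma>. \<exists>e>0. \<forall>B\<in>\<Gamma>. dist B A < e \<longrightarrow> B = A)"

definition orbit_i :: "(real^2^2) set \<Rightarrow> complex set" where
  "orbit_i \<Gamma> = {z. \<exists>A\<in>\<Gamma>. moebius_act A (Some \<i>) = Some z}"

text \<open>Limit set: accumulation points of the orbit in the Riemann sphere
  (infinity is an accumulation point iff the orbit is unbounded).\<close>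
definition limit_set :: "(real^2^2) set \<Rightarrow> csphere set" where
  "limit_set \<Gamma> = {Some x | x. x islimpt orbit_i \<Gamma>} \<union>
                 (if bounded (orbit_i \<Gamma>) then {} else {None})"

definition non_elementary :: "(real^2^2) set \<Rightarrow> bool" where
  "non_elementary \<Gamma> \<longleftrightarrow> \<not> (finite (limit_set \<Gamma>) \<and> card (limit_set \<Gamma>) \<le> 2)"

definition sphere_chart :: "bool \<Rightarrow> complex \<Rightarrow> csphere" where
  "sphere_chart at_inf z = (if at_inf then (if z = 0 then None else Some (1 / z)) else Some z)"

definition holomorphic2_on :: "(complex \<times> complex \<Rightarrow> complex) \<Rightarrow> (complex \<times> complex) set \<Rightarrow> bool" where
  "holomorphic2_on f S \<longleftrightarrow>
     (\<forall>p\<in>S. \<exists>c1 c2. (f has_derivative (\<lambda>(u, v). c1 * u + c2 * v)) (at p))"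

definition holomorphic_on_G :: "(csphere \<times> csphere \<Rightarrow> complex) \<Rightarrow> bool" where
  "holomorphic_on_G F \<longleftrightarrow>
     (\<forall>a b. holomorphic2_on (\<lambda>(z, w). F (sphere_chart a z, sphere_chart b w))
               {(z, w). (sphere_chart a z, sphere_chart b w) \<in> G_dom})"

end

theory Submission
  imports Defs "HOL-Complex_Analysis.Conformal_Mappings"
begin

definition proj :: "complex \<times> complex \<Rightarrow> csphere" where
  "proj h = (if snd h = 0 then None else Some (fst h / snd h))"

definition hom :: "csphere \<Rightarrow> complex \<times> complex" where
  "hom p = (case p of None \<Rightarrow> (1, 0) | Some z \<Rightarrow> (z, 1))"

definition mv :: "real^2^2 \<Rightarrow> complex \<times> complex \<Rightarrow> complex \<times> complex" where
  "mv A h = (of_real (A$1$1) * fst h + of_real (A$1$2) * snd h,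
             of_real (A$2$1) * fst h + of_real (A$2$2) * snd h)"

definition smul :: "complex \<Rightarrow> complex \<times> complex \<Rightarrow> complex \<times> complex" where
  "smul t h = (t * fst h, t * snd h)"

definition adj2 :: "real^2^2 \<Rightarrow> real^2^2" where
  "adj2 A = vector [vector [A$2$2, - A$1$2], vector [- A$2$1, A$1$1]]"

lemma adj2_nth[simp]: "adj2 A $1$1 = A$2$2" "adj2 A $1$2 = - A$1$2"
  "adj2 A $2$1 = - A$2$1" "adj2 A $2$2 = A$1$1"
  by (simp_all add: adj2_def)

lemma act_proj: "moebius_act A p = proj (mv A (hom p))"
  by (cases p) (simp_all add: moebius_act_def proj_def mv_def hom_def Let_def)

lemma proj_smul: "t \<noteq> 0 \<Longrightarrow> proj (smul t h) = proj h"
  by (auto simp: proj_def smul_def)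

lemma mv_smul: "mv A (smul t h) = smul t (mv A h)"
  by (simp add: mv_def smul_def algebra_simps)

lemma hom_proj: "h \<noteq> (0,0) \<Longrightarrow> \<exists>t. t \<noteq> 0 \<and> h = smul t (hom (proj h))"
  apply (cases h)
  apply (auto simp: proj_def hom_def smul_def)
  done

lemma proj_hom[simp]: "proj (hom p) = p"
  by (cases p) (auto simp: proj_def hom_def)

lemma hom_nz[simp]: "hom p \<noteq> (0,0)"
  by (cases p) (auto simp: hom_def)

lemma act_proj2: "h \<noteq> (0,0) \<Longrightarrow> moebius_act A (proj h) = proj (mv A h)"
proof -
  assume "h \<noteq> (0,0)"
  then obtain t where t: "t \<noteq> 0" "h = smul t (hom (proj h))" using hom_proj by blast
  have "proj (mv A h) = proj (smul t (mv A (hom (proj h))))" using t by (metis mv_smul)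
  also have "\<dots> = moebius_act A (proj h)" using t by (simp add: proj_smul act_proj)
  finally show ?thesis by simp
qed

lemma mv_adj: "mv A (mv (adj2 A) h) = smul (of_real (det A)) h"
  "mv (adj2 A) (mv A h) = smul (of_real (det A)) h"
  by (simp_all add: mv_def smul_def det_2 algebra_simps)

lemma mat_mult2: "((A::real^2^2) ** (B::real^2^2)) $ i $ j = A$i$1 * B$1$j + A$i$2 * B$2$j"
  by (simp add: matrix_matrix_mult_def sum_2)

lemma mat_eq2: "(A::real^2^2) = B \<longleftrightarrow> A$1$1 = B$1$1 \<and> A$1$2 = B$1$2 \<and> A$2$1 = B$2$1 \<and> A$2$2 = B$2$2"
  by (auto simp: vec_eq_iff forall_2)

lemma matrix_inv_adj: assumes "det A = (1::real)" shows "matrix_inv A = adj2 A"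
proof -
  have 1: "A ** adj2 A = mat 1" "adj2 A ** A = mat 1"
    using assms by (auto simp: mat_eq2 mat_mult2 det_2 mat_def algebra_simps)
  have "\<exists>A'. A ** A' = mat 1 \<and> A' ** A = mat 1" using 1 by blast
  then have 2: "A ** matrix_inv A = mat 1 \<and> matrix_inv A ** A = mat 1"
    unfolding matrix_inv_def by (rule someI_ex)
  have "matrix_inv A = matrix_inv A ** (A ** adj2 A)" using 1 by simp
  also have "\<dots> = (matrix_inv A ** A) ** adj2 A" by (simp add: matrix_mul_assoc)
  also have "\<dots> = adj2 A" using 2 by simp
  finally show ?thesis .
qed

definition excl :: "bool \<Rightarrow> csphere" where
  "excl b = (if b then Some 0 else None)"

definition cinv :: "bool \<Rightarrow> csphere \<Rightarrow> complex" where
  "cinv b p = (if b then (case p of None \<Rightarrow> 0 | Some z \<Rightarrow> 1 / z) else (case p of None \<Rightarrow> 0 | Some z \<Rightarrow> z))"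

definition ch :: "csphere \<Rightarrow> bool" where "ch p = (p = None)"

lemma cinv_simps[simp]: "cinv False (Some z) = z" "cinv True (Some z) = 1 / z"
  "cinv False None = 0" "cinv True None = 0"
  by (simp_all add: cinv_def)

lemma chart_cinv: "p \<noteq> excl b \<Longrightarrow> sphere_chart b (cinv b p) = p"
  by (cases p; cases b) (auto simp: excl_def cinv_def sphere_chart_def)

lemma chart_not_excl: "sphere_chart b w \<noteq> excl b"
  by (cases b) (auto simp: excl_def sphere_chart_def)

lemma cinv_chart[simp]: "cinv b (sphere_chart b w) = w"
  by (cases b) (auto simp: cinv_def sphere_chart_def)

lemma ch_not_excl[simp]: "p \<noteq> excl (ch p)"
  by (cases p) (auto simp: excl_def ch_def)

lemma excl_chart: "excl b = sphere_chart (\<not> b) 0"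
  by (cases b) (auto simp: excl_def sphere_chart_def)

definition sconv :: "(nat \<Rightarrow> csphere) \<Rightarrow> csphere \<Rightarrow> bool" where
  "sconv s p \<longleftrightarrow> eventually (\<lambda>n. s n \<noteq> excl (ch p)) sequentially \<and>
     ((\<lambda>n. cinv (ch p) (s n)) \<longlongrightarrow> cinv (ch p) p) sequentially"

lemma sconv_proj:
  assumes h: "(h \<longlongrightarrow> k) sequentially" and k: "k \<noteq> (0,0)"
  shows "sconv (\<lambda>n. proj (h n)) (proj k)"
proof -
  have t1: "((\<lambda>n. fst (h n)) \<longlongrightarrow> fst k) sequentially" "((\<lambda>n. snd (h n)) \<longlongrightarrow> snd k) sequentially"
    using h by (auto intro: tendsto_fst tendsto_snd)
  show ?thesis
  proof (cases "snd k = 0")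
    case False
    have chk: "ch (proj k) = False" "proj k = Some (fst k / snd k)" using False by (auto simp: ch_def proj_def)
    have ev: "eventually (\<lambda>n. snd (h n) \<noteq> 0) sequentially"
      using t1(2) False tendsto_imp_eventually_ne by blast
    have "((\<lambda>n. fst (h n) / snd (h n)) \<longlongrightarrow> fst k / snd k) sequentially"
      using t1 False by (intro tendsto_divide) auto
    moreover have "eventually (\<lambda>n. fst (h n) / snd (h n) = cinv False (proj (h n))) sequentially"
      using ev by eventually_elim (simp add: proj_def cinv_def)
    ultimately have "((\<lambda>n. cinv False (proj (h n))) \<longlongrightarrow> fst k / snd k) sequentially"
      by (rule Lim_transform_eventually)
    moreover have "eventually (\<lambda>n. proj (h n) \<noteq> None) sequentially"
      using ev by eventually_elim (simp add: proj_def)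
    ultimately show ?thesis unfolding sconv_def chk(1) by (simp add: excl_def cinv_def chk(2))
  next
    case True
    then have f: "fst k \<noteq> 0" using k by (cases k) auto
    have chk: "ch (proj k) = True" "proj k = None" using True by (auto simp: ch_def proj_def)
    have ev: "eventually (\<lambda>n. fst (h n) \<noteq> 0) sequentially"
      using t1(1) f tendsto_imp_eventually_ne by blast
    have "((\<lambda>n. snd (h n) / fst (h n)) \<longlongrightarrow> snd k / fst k) sequentially"
      using t1 f by (intro tendsto_divide) auto
    moreover have "eventually (\<lambda>n. snd (h n) / fst (h n) = cinv True (proj (h n))) sequentially"
      using ev by eventually_elim (simp add: proj_def cinv_def)
    ultimately have "((\<lambda>n. cinv True (proj (h n))) \<longlongrightarrow> snd k / fst k) sequentially"
      by (rule Lim_transform_eventually)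
    then have "((\<lambda>n. cinv True (proj (h n))) \<longlongrightarrow> 0) sequentially" using True by simp
    moreover have "eventually (\<lambda>n. proj (h n) \<noteq> Some 0) sequentially"
      using ev by eventually_elim (simp add: proj_def)
    ultimately show ?thesis unfolding sconv_def chk(1) by (simp add: excl_def cinv_def chk(2))
  qed
qed

lemma sconv_neq:
  assumes "sconv s p" "q \<noteq> p"
  shows "eventually (\<lambda>n. s n \<noteq> q) sequentially"
proof (cases "q = excl (ch p)")
  case True
  then show ?thesis using assms unfolding sconv_def by simp
next
  case False
  have "cinv (ch p) q \<noteq> cinv (ch p) p"
  proof
    assume "cinv (ch p) q = cinv (ch p) p"
    then have "sphere_chart (ch p) (cinv (ch p) q) = sphere_chart (ch p) (cinv (ch p) p)" by simp
    then show False using chart_cinv[OF False] chart_cinv[OF ch_not_excl[of p]] assms(2) by simp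
  qed
  then have "eventually (\<lambda>n. cinv (ch p) (s n) \<noteq> cinv (ch p) q) sequentially"
  proof -
    have "((\<lambda>n. cinv (ch p) (s n)) \<longlongrightarrow> cinv (ch p) p) sequentially"
      using assms(1) unfolding sconv_def by blast
    from tendsto_imp_eventually_ne[OF this] show ?thesis using \<open>cinv (ch p) q \<noteq> cinv (ch p) p\<close> by auto
  qed
  then show ?thesis by (rule eventually_mono) auto
qed

lemma sconv_unique:
  assumes "sconv s p" "sconv s q" shows "p = q"
proof (cases "ch p = ch q")
  case True
  have "((\<lambda>n. cinv (ch p) (s n)) \<longlongrightarrow> cinv (ch p) p) sequentially"
    "((\<lambda>n. cinv (ch p) (s n)) \<longlongrightarrow> cinv (ch p) q) sequentially"
    using assms True unfolding sconv_def by auto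
  then have "cinv (ch p) p = cinv (ch p) q" by (rule LIMSEQ_unique)
  then have "sphere_chart (ch p) (cinv (ch p) p) = sphere_chart (ch q) (cinv (ch q) q)" using True by simp
  then show "p = q" using chart_cinv[OF ch_not_excl[of p]] chart_cinv[OF ch_not_excl[of q]] by simp
next
  case False
  have mixed: False if s: "sconv s (Some z)" "sconv s None" for z
  proof -
    have e1: "eventually (\<lambda>n. s n \<noteq> None) sequentially" "eventually (\<lambda>n. s n \<noteq> Some 0) sequentially"
      using s unfolding sconv_def by (auto simp: excl_def ch_def)
    have t1: "((\<lambda>n. cinv False (s n)) \<longlongrightarrow> z) sequentially"
      "((\<lambda>n. cinv True (s n)) \<longlongrightarrow> 0) sequentially"
      using s unfolding sconv_def by (auto simp: ch_def)
    have "((\<lambda>n. cinv False (s n) * cinv True (s n)) \<longlongrightarrow> z * 0) sequentially"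
      using t1 by (intro tendsto_mult)
    moreover have "eventually (\<lambda>n. cinv False (s n) * cinv True (s n) = 1) sequentially"
    proof (rule eventually_elim2[OF e1(1) e1(2)])
      fix n assume "s n \<noteq> None" "s n \<noteq> Some 0"
      then obtain w where "s n = Some w" "w \<noteq> 0" by (cases "s n") auto
      then show "cinv False (s n) * cinv True (s n) = 1" by simp
    qed
    ultimately have "((\<lambda>n. 1::complex) \<longlongrightarrow> z * 0) sequentially"
      by (rule Lim_transform_eventually)
    then have "(1::complex) = z * 0" by (rule LIMSEQ_const_iff[THEN iffD1])
    then show False by simp
  qed
  from False consider z where "p = Some z" "q = None" | z where "q = Some z" "p = None"
    by (cases p; cases q) (auto simp: ch_def)
  then show ?thesis
  proof cases
    case 1 then show ?thesis using mixed[of z] assms by simp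
  next
    case 2 then show ?thesis using mixed[of z] assms by simp
  qed
qed

lemma sconv_subseq: "strict_mono r \<Longrightarrow> sconv s p \<Longrightarrow> sconv (s \<circ> r) p"
  unfolding sconv_def
proof (intro conjI)
  assume r: "strict_mono r" and h: "eventually (\<lambda>n. s n \<noteq> excl (ch p)) sequentially \<and>
     ((\<lambda>n. cinv (ch p) (s n)) \<longlongrightarrow> cinv (ch p) p) sequentially"
  show "eventually (\<lambda>n. (s \<circ> r) n \<noteq> excl (ch p)) sequentially"
    using eventually_subseq[OF r, of "\<lambda>n. s n \<noteq> excl (ch p)"] h by (simp add: o_def)
  show "((\<lambda>n. cinv (ch p) ((s \<circ> r) n)) \<longlongrightarrow> cinv (ch p) p) sequentially"
    using LIMSEQ_subseq_LIMSEQ[OF conjunct2[OF h] r] by (simp add: o_def)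
qed

lemma sconv_if:
  assumes "sconv s p" "sconv t p"
  shows "sconv (\<lambda>n. if P n then s n else t n) p"
proof -
  have 1: "eventually (\<lambda>n. (if P n then s n else t n) \<noteq> excl (ch p)) sequentially"
  proof -
    have "eventually (\<lambda>n. s n \<noteq> excl (ch p)) sequentially" "eventually (\<lambda>n. t n \<noteq> excl (ch p)) sequentially"
      using assms unfolding sconv_def by auto
    then show ?thesis by (rule eventually_elim2) auto
  qed
  have 2: "((\<lambda>n. cinv (ch p) (if P n then s n else t n)) \<longlongrightarrow> cinv (ch p) p) sequentially"
  proof (rule topological_tendstoI)
    fix S assume "open S" "cinv (ch p) p \<in> S"
    then have "eventually (\<lambda>n. cinv (ch p) (s n) \<in> S) sequentially"
      "eventually (\<lambda>n. cinv (ch p) (t n) \<in> S) sequentially"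
      using assms unfolding sconv_def by (auto simp: tendsto_def)
    then show "eventually (\<lambda>n. cinv (ch p) (if P n then s n else t n) \<in> S) sequentially"
      by (rule eventually_elim2) auto
  qed
  show ?thesis using 1 2 unfolding sconv_def by blast
qed

lemma F_cont:
  assumes F: "holomorphic_on_G F" and pq: "(p, q) \<in> G_dom"
    and s: "sconv s p" and t: "sconv t q"
  shows "((\<lambda>n. F (s n, t n)) \<longlongrightarrow> F (p, q)) sequentially"
proof -
  define a where "a = ch p"
  define b where "b = ch q"
  define g where "g = (\<lambda>(z, w). F (sphere_chart a z, sphere_chart b w))"
  have cp: "sphere_chart a (cinv a p) = p" "sphere_chart b (cinv b q) = q"
    unfolding a_def b_def by (rule chart_cinv[OF ch_not_excl])+
  have mem: "(cinv a p, cinv b q) \<in> {(z, w). (sphere_chart a z, sphere_chart b w) \<in> G_dom}"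
    using pq by (simp add: cp)
  have "holomorphic2_on g {(z, w). (sphere_chart a z, sphere_chart b w) \<in> G_dom}"
    unfolding g_def by (rule F[unfolded holomorphic_on_G_def, rule_format, of a b])
  then obtain c1 c2 where "(g has_derivative (\<lambda>(u, v). c1 * u + c2 * v)) (at (cinv a p, cinv b q))"
    using mem unfolding holomorphic2_on_def by blast
  then have cont: "isCont g (cinv a p, cinv b q)"
    by (rule has_derivative_continuous)
  have s1: "((\<lambda>n. cinv a (s n)) \<longlongrightarrow> cinv a p) sequentially" "eventually (\<lambda>n. s n \<noteq> excl a) sequentially"
    using s unfolding sconv_def a_def by blast+
  have t1: "((\<lambda>n. cinv b (t n)) \<longlongrightarrow> cinv b q) sequentially" "eventually (\<lambda>n. t n \<noteq> excl b) sequentially"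
    using t unfolding sconv_def b_def by blast+
  have "((\<lambda>n. (cinv a (s n), cinv b (t n))) \<longlongrightarrow> (cinv a p, cinv b q)) sequentially"
    using s1(1) t1(1) by (rule tendsto_Pair)
  then have "((\<lambda>n. g (cinv a (s n), cinv b (t n))) \<longlongrightarrow> g (cinv a p, cinv b q)) sequentially"
    using cont by (rule isCont_tendsto_compose[rotated])
  moreover have "eventually (\<lambda>n. g (cinv a (s n), cinv b (t n)) = F (s n, t n)) sequentially"
    using s1(2) t1(2) by (rule eventually_elim2) (simp add: g_def chart_cinv)
  ultimately have "((\<lambda>n. F (s n, t n)) \<longlongrightarrow> g (cinv a p, cinv b q)) sequentially"
    by (rule Lim_transform_eventually)
  moreover have "g (cinv a p, cinv b q) = F (p, q)" by (simp add: g_def cp)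
  ultimately show ?thesis by simp
qed

lemma mat_tendsto2:
  assumes "\<And>i j. ((\<lambda>n. f n $ i $ j) \<longlongrightarrow> (A::real^2^2) $ i $ j) F"
  shows "(f \<longlongrightarrow> A) F"
  by (intro vec_tendstoI) (use assms in auto)

lemma mat_nth_tendsto: "(f \<longlongrightarrow> (A::real^2^2)) F \<Longrightarrow> ((\<lambda>n. f n $ i $ j) \<longlongrightarrow> A $ i $ j) F"
  by (intro tendsto_vec_nth)

lemma tendsto_matmul2:
  assumes "(f \<longlongrightarrow> (A::real^2^2)) F" "(g \<longlongrightarrow> (B::real^2^2)) F"
  shows "((\<lambda>n. f n ** g n) \<longlongrightarrow> A ** B) F"
  apply (rule mat_tendsto2)
  apply (simp only: mat_mult2)
  apply (intro tendsto_intros mat_nth_tendsto assms)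
  done

lemma tendsto_adj2:
  assumes "(f \<longlongrightarrow> (A::real^2^2)) F"
  shows "((\<lambda>n. adj2 (f n)) \<longlongrightarrow> adj2 A) F"
proof (rule mat_tendsto2)
  fix i j :: 2
  show "((\<lambda>n. adj2 (f n) $ i $ j) \<longlongrightarrow> adj2 A $ i $ j) F"
    using exhaust_2[of i] exhaust_2[of j]
    by (elim disjE; simp; intro tendsto_intros mat_nth_tendsto assms)
qed

lemma tendsto_det2:
  assumes "(f \<longlongrightarrow> (A::real^2^2)) F"
  shows "((\<lambda>n. det (f n)) \<longlongrightarrow> det A) F"
  unfolding det_2 by (intro tendsto_intros mat_nth_tendsto assms)

lemma fuchsian_det: "fuchsian \<Gamma> \<Longrightarrow> A \<in> \<Gamma> \<Longrightarrow> det A = 1"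
  by (simp add: fuchsian_def)

lemma fuchsian_adj: "fuchsian \<Gamma> \<Longrightarrow> A \<in> \<Gamma> \<Longrightarrow> adj2 A \<in> \<Gamma>"
proof -
  assume "fuchsian \<Gamma>" "A \<in> \<Gamma>"
  then have "det A = 1" "matrix_inv A \<in> \<Gamma>" by (auto simp: fuchsian_def)
  then show ?thesis using matrix_inv_adj[of A] by simp
qed

lemma fuchsian_mult: "fuchsian \<Gamma> \<Longrightarrow> A \<in> \<Gamma> \<Longrightarrow> B \<in> \<Gamma> \<Longrightarrow> A ** B \<in> \<Gamma>"
  by (simp add: fuchsian_def)

lemma adj2_mult: "det A = 1 \<Longrightarrow> adj2 A ** A = mat 1"
  by (auto simp: mat_eq2 mat_mult2 det_2 mat_def algebra_simps)

lemma adj2_mult_eq: "det A = 1 \<Longrightarrow> adj2 A ** B = mat 1 \<Longrightarrow> B = A"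
proof -
  assume d: "det A = 1" and h: "adj2 A ** B = mat 1"
  have "A ** adj2 A = mat 1" using d by (auto simp: mat_eq2 mat_mult2 det_2 mat_def algebra_simps)
  then have "B = (A ** adj2 A) ** B" by simp
  also have "\<dots> = A" by (simp add: matrix_mul_assoc[symmetric] h)
  finally show ?thesis .
qed

lemma fin_bounded:
  assumes G: "fuchsian \<Gamma>"
  shows "finite {A\<in>\<Gamma>. norm A \<le> R}"
proof (rule ccontr)
  assume "infinite {A\<in>\<Gamma>. norm A \<le> R}"
  then obtain f :: "nat \<Rightarrow> real^2^2" where f: "inj f" "range f \<subseteq> {A\<in>\<Gamma>. norm A \<le> R}"
    using infinite_countable_subset by blast
  have "seq_compact (cball (0::real^2^2) R)"
    by (rule compact_imp_seq_compact) simp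
  moreover have "\<forall>n. f n \<in> cball 0 R" using f(2) by auto
  ultimately obtain B r where r: "strict_mono r" "((f \<circ> r) \<longlongrightarrow> B) sequentially"
    unfolding seq_compact_def by blast
  have fG: "\<And>n. f n \<in> \<Gamma>" using f(2) by auto
  have dB: "det B = 1"
  proof -
    have "((\<lambda>n. det ((f \<circ> r) n)) \<longlongrightarrow> det B) sequentially" by (rule tendsto_det2[OF r(2)])
    moreover have "\<And>n. det ((f \<circ> r) n) = 1" using fuchsian_det[OF G fG] by simp
    ultimately show ?thesis using LIMSEQ_const_iff by (metis (no_types) ext)
  qed
  define C where "C n = adj2 (f (r n)) ** f (r (Suc n))" for n
  have CG: "C n \<in> \<Gamma>" for n unfolding C_def by (intro fuchsian_mult[OF G] fuchsian_adj[OF G] fG)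
  have "((\<lambda>n. adj2 ((f \<circ> r) n)) \<longlongrightarrow> adj2 B) sequentially" by (rule tendsto_adj2[OF r(2)])
  moreover have "((\<lambda>n. (f \<circ> r) (Suc n)) \<longlongrightarrow> B) sequentially"
    using r(2) by (rule LIMSEQ_Suc)
  ultimately have "((\<lambda>n. adj2 ((f \<circ> r) n) ** (f \<circ> r) (Suc n)) \<longlongrightarrow> adj2 B ** B) sequentially"
    by (rule tendsto_matmul2)
  moreover have "C = (\<lambda>n. adj2 ((f \<circ> r) n) ** (f \<circ> r) (Suc n))" by (simp add: C_def fun_eq_iff)
  ultimately have Clim: "(C \<longlongrightarrow> mat 1) sequentially" using adj2_mult[OF dB] by simp
  have I: "mat 1 \<in> \<Gamma>" using G by (simp add: fuchsian_def)
  obtain e where e: "e > 0" "\<And>X. X \<in> \<Gamma> \<Longrightarrow> dist X (mat 1) < e \<Longrightarrow> X = mat 1"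
    using G I unfolding fuchsian_def by blast
  obtain N where "dist (C N) (mat 1) < e" using Clim e(1) by (meson LIMSEQ_iff_nz dist_norm le_refl)
  then have "C N = mat 1" using e(2) CG by blast
  then have "f (r (Suc N)) = f (r N)" unfolding C_def using adj2_mult_eq fuchsian_det[OF G fG] by blast
  then have "r (Suc N) = r N" using f(1) by (simp add: inj_eq)
  moreover have "r N < r (Suc N)" using r(1) by (simp add: strict_mono_def)
  ultimately show False by simp
qed

lemma norm_to_infty:
  assumes G: "fuchsian \<Gamma>" and AG: "\<And>n. A n \<in> \<Gamma>" and fib: "\<And>B. finite {n. A n = B}"
  shows "filterlim (\<lambda>n. norm (A n)) at_top sequentially"
  unfolding filterlim_at_top
proof
  fix Z
  have "{n. \<not> Z \<le> norm (A n)} \<subseteq> (\<Union>B\<in>{B\<in>\<Gamma>. norm B \<le> Z}. {n. A n = B})"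
    using AG by fastforce
  moreover have "finite (\<Union>B\<in>{B\<in>\<Gamma>. norm B \<le> Z}. {n. A n = B})"
    using fin_bounded[OF G] fib by blast
  ultimately have "finite {n. \<not> Z \<le> norm (A n)}" by (rule finite_subset)
  then show "eventually (\<lambda>n. Z \<le> norm (A n)) sequentially"
    unfolding cofinite_eq_sequentially[symmetric] eventually_cofinite .
qed

lemma det_scale2: "det (c *\<^sub>R (A::real^2^2)) = c^2 * det A"
  by (simp add: det_2 power2_eq_square algebra_simps)

lemma normalized_limit:
  fixes A :: "nat \<Rightarrow> real^2^2"
  assumes lim: "filterlim (\<lambda>n. norm (A n)) at_top sequentially" and d: "\<And>n. det (A n) = 1"
  shows "\<exists>r M. strict_mono r \<and> ((\<lambda>n. (1 / norm (A (r n))) *\<^sub>R A (r n)) \<longlongrightarrow> M) sequentially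
              \<and> norm M = 1 \<and> det M = 0"
proof -
  have nz: "A n \<noteq> 0" for n
  proof
    assume "A n = 0"
    then have "det (A n) = 0" unfolding det_2 by simp
    then show False using d[of n] by simp
  qed
  define N where "N n = (1 / norm (A n)) *\<^sub>R A n" for n
  have "N n \<in> sphere 0 1" for n using nz[of n] by (simp add: N_def)
  moreover have "seq_compact (sphere (0::real^2^2) 1)"
    by (rule compact_imp_seq_compact) simp
  ultimately obtain M r where r: "strict_mono r" "M \<in> sphere 0 1" "((N \<circ> r) \<longlongrightarrow> M) sequentially"
    unfolding seq_compact_def by metis
  have "((\<lambda>n. det ((N \<circ> r) n)) \<longlongrightarrow> det M) sequentially" by (rule tendsto_det2[OF r(3)])
  moreover have "(\<lambda>n. det ((N \<circ> r) n)) = (\<lambda>n. (inverse (norm (A (r n))))^2)"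
    by (simp add: N_def det_scale2 d fun_eq_iff divide_inverse)
  moreover have "((\<lambda>n. (inverse (norm (A (r n))))^2) \<longlongrightarrow> 0^2) sequentially"
  proof -
    have "filterlim (\<lambda>n. norm (A (r n))) at_top sequentially"
      using filterlim_compose[OF lim filterlim_subseq[OF r(1)]] by (simp add: o_def)
    then have "((\<lambda>n. inverse (norm (A (r n)))) \<longlongrightarrow> 0) sequentially"
      by (rule tendsto_inverse_0_at_top)
    then show ?thesis by (intro tendsto_intros)
  qed
  ultimately have "det M = 0^2" by (metis LIMSEQ_unique)
  then show ?thesis using r by (intro exI[of _ r] exI[of _ M]) (auto simp: N_def o_def)
qed

lemma rank1:
  assumes "det (M::real^2^2) = 0" "M \<noteq> 0"
  shows "\<exists>u1 u2 v1 v2::real. (u1 \<noteq> 0 \<or> u2 \<noteq> 0) \<and> (v1 \<noteq> 0 \<or> v2 \<noteq> 0) \<and>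
     M$1$1 = u1 * v1 \<and> M$1$2 = u1 * v2 \<and> M$2$1 = u2 * v1 \<and> M$2$2 = u2 * v2"
proof -
  have dd: "M$1$1 * M$2$2 = M$1$2 * M$2$1" using assms(1) by (simp add: det_2)
  have nz: "M$1$1 \<noteq> 0 \<or> M$1$2 \<noteq> 0 \<or> M$2$1 \<noteq> 0 \<or> M$2$2 \<noteq> 0"
    using assms(2) by (auto simp: mat_eq2)
  show ?thesis
  proof (cases "M$1$1 \<noteq> 0")
    case True
    show ?thesis
      by (rule exI[of _ 1], rule exI[of _ "M$2$1 / M$1$1"], rule exI[of _ "M$1$1"], rule exI[of _ "M$1$2"])
         (use True dd in \<open>auto simp: field_simps\<close>)
  next
    case F1: False
    show ?thesis
    proof (cases "M$1$2 \<noteq> 0")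
      case True
      show ?thesis
        by (rule exI[of _ 1], rule exI[of _ "M$2$2 / M$1$2"], rule exI[of _ "M$1$1"], rule exI[of _ "M$1$2"])
           (use True F1 dd in \<open>auto simp: field_simps\<close>)
    next
      case False
      show ?thesis
        by (rule exI[of _ 0], rule exI[of _ 1], rule exI[of _ "M$2$1"], rule exI[of _ "M$2$2"])
           (use False F1 nz in auto)
    qed
  qed
qed

lemma mv_scale: "mv (c *\<^sub>R A) h = smul (of_real c) (mv A h)"
  by (simp add: mv_def smul_def algebra_simps)

lemma adj2_scale: "adj2 (c *\<^sub>R A) = c *\<^sub>R adj2 A"
  by (simp add: mat_eq2)

lemma act_scale: "c \<noteq> 0 \<Longrightarrow> moebius_act A z = proj (mv (c *\<^sub>R A) (hom z))"
  by (simp add: act_proj mv_scale proj_smul)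

lemma mv_tendsto:
  assumes "(N \<longlongrightarrow> M) sequentially"
  shows "((\<lambda>n. mv (N n) h) \<longlongrightarrow> mv M h) sequentially"
  unfolding mv_def by (intro tendsto_intros mat_nth_tendsto assms)

lemma proj_eq_iff:
  assumes "h \<noteq> (0,0)" "k \<noteq> (0,0)"
  shows "proj h = proj k \<longleftrightarrow> fst h * snd k = snd h * fst k"
proof (cases h; cases k)
  fix a b c d assume hk: "h = (a, b)" "k = (c, d)"
  show ?thesis
  proof (cases "b = 0")
    case True
    then have "a \<noteq> 0" using assms hk by auto
    then show ?thesis using hk True assms by (cases "d = 0") (auto simp: proj_def)
  next
    case False
    then show ?thesis using hk assms by (cases "d = 0") (auto simp: proj_def divide_eq_eq eq_divide_eq mult.commute)
  qed
qed

lemma sconv_const: "sconv (\<lambda>n. p) p"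
  unfolding sconv_def by simp

lemma act_inv:
  assumes "det A = 1"
  shows "moebius_act A (moebius_act (adj2 A) q) = q" "moebius_act (adj2 A) (moebius_act A q) = q"
proof -
  have 1: "mv A (mv (adj2 A) (hom q)) = hom q" "mv (adj2 A) (mv A (hom q)) = hom q"
    using mv_adj[of A "hom q"] assms by (simp_all add: smul_def)
  have "mv (adj2 A) (hom q) \<noteq> (0,0)"
  proof
    assume "mv (adj2 A) (hom q) = (0,0)"
    then have "mv A (mv (adj2 A) (hom q)) = (0,0)" by (simp add: mv_def)
    with 1(1) hom_nz[of q] show False by simp
  qed
  then show "moebius_act A (moebius_act (adj2 A) q) = q"
    using 1(1) act_proj[of "adj2 A" q] act_proj2[of _ A] by simp
  have "mv A (hom q) \<noteq> (0,0)"
  proof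
    assume "mv A (hom q) = (0,0)"
    then have "mv (adj2 A) (mv A (hom q)) = (0,0)" by (simp add: mv_def)
    with 1(2) hom_nz[of q] show False by simp
  qed
  then show "moebius_act (adj2 A) (moebius_act A q) = q"
    using 1(2) act_proj[of A q] act_proj2[of _ "adj2 A"] by simp
qed

lemma dynamics:
  fixes A :: "nat \<Rightarrow> real^2^2"
  assumes G: "fuchsian \<Gamma>" and AG: "\<And>n. A n \<in> \<Gamma>" and fib: "\<And>B. finite {n. A n = B}"
  shows "\<exists>r X Y. strict_mono r \<and> (\<forall>z. z \<noteq> Y \<longrightarrow> sconv (\<lambda>n. moebius_act (A (r n)) z) X)
     \<and> (\<forall>q. q \<noteq> X \<longrightarrow> sconv (\<lambda>n. moebius_act (adj2 (A (r n))) q) Y) \<and> Y \<noteq> Some \<i>"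
proof -
  have d: "det (A n) = 1" for n using fuchsian_det[OF G AG] .
  obtain r M where r: "strict_mono r" "((\<lambda>n. (1 / norm (A (r n))) *\<^sub>R A (r n)) \<longlongrightarrow> M) sequentially"
      "norm M = 1" "det M = 0"
    using normalized_limit[OF norm_to_infty[OF G AG fib] d] by blast
  have "M \<noteq> 0" using r(3) by auto
  then obtain u1 u2 v1 v2 :: real where uv: "u1 \<noteq> 0 \<or> u2 \<noteq> 0" "v1 \<noteq> 0 \<or> v2 \<noteq> 0"
     "M$1$1 = u1 * v1" "M$1$2 = u1 * v2" "M$2$1 = u2 * v1" "M$2$2 = u2 * v2"
    using rank1[OF r(4)] by blast
  define U where "U = (complex_of_real u1, complex_of_real u2)"
  define V where "V = (complex_of_real v2, - complex_of_real v1)"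
  have Unz: "U \<noteq> (0,0)" "V \<noteq> (0,0)" using uv(1,2) by (auto simp: U_def V_def)
  define N where "N n = (1 / norm (A (r n))) *\<^sub>R A (r n)" for n
  have nn: "norm (A (r n)) \<noteq> 0" for n using d[of "r n"] by (auto simp: det_2)
  have mvM: "mv M h = smul (of_real v1 * fst h + of_real v2 * snd h) U" for h
    by (simp add: mv_def smul_def U_def uv algebra_simps)
  have mvadjM: "mv (adj2 M) h = smul (of_real u2 * fst h - of_real u1 * snd h) V" for h
    by (simp add: mv_def smul_def V_def uv algebra_simps)
  have 1: "sconv (\<lambda>n. moebius_act (A (r n)) z) (proj U)" if z: "z \<noteq> proj V" for z
  proof -
    have c: "of_real v1 * fst (hom z) + of_real v2 * snd (hom z) \<noteq> 0"
    proof
      assume "of_real v1 * fst (hom z) + of_real v2 * snd (hom z) = 0"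
      then have "- (of_real v1 * fst (hom z)) = of_real v2 * snd (hom z)"
        by (simp add: neg_eq_iff_add_eq_0)
      then have "proj (hom z) = proj V" using proj_eq_iff[OF hom_nz Unz(2)]
        by (simp add: V_def algebra_simps)
      then show False using z by simp
    qed
    have e: "moebius_act (A (r n)) z = proj (mv (N n) (hom z))" for n
      unfolding N_def by (rule act_scale) (use nn in simp)
    have "sconv (\<lambda>n. proj (mv (N n) (hom z))) (proj (mv M (hom z)))"
      by (rule sconv_proj[OF mv_tendsto]) (use r(2) c Unz in \<open>auto simp: N_def mvM smul_def prod_eq_iff\<close>)
    moreover have "proj (mv M (hom z)) = proj U" using c by (simp add: mvM proj_smul)
    ultimately show ?thesis by (simp add: e)
  qed
  have 2: "sconv (\<lambda>n. moebius_act (adj2 (A (r n))) q) (proj V)" if q: "q \<noteq> proj U" for q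
  proof -
    have c: "of_real u2 * fst (hom q) - of_real u1 * snd (hom q) \<noteq> 0"
    proof
      assume "of_real u2 * fst (hom q) - of_real u1 * snd (hom q) = 0"
      then have "proj (hom q) = proj U" using proj_eq_iff[OF hom_nz Unz(1)]
        by (simp add: U_def algebra_simps)
      then show False using q by simp
    qed
    have e: "moebius_act (adj2 (A (r n))) q = proj (mv (adj2 (N n)) (hom q))" for n
      unfolding N_def adj2_scale by (rule act_scale) (use nn in simp)
    have "((\<lambda>n. adj2 (N n)) \<longlongrightarrow> adj2 M) sequentially"
      by (rule tendsto_adj2) (use r(2) in \<open>simp add: N_def\<close>)
    then have "sconv (\<lambda>n. proj (mv (adj2 (N n)) (hom q))) (proj (mv (adj2 M) (hom q)))"
      by (rule sconv_proj[OF mv_tendsto]) (use c Unz in \<open>auto simp: mvadjM smul_def prod_eq_iff\<close>)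
    moreover have "proj (mv (adj2 M) (hom q)) = proj V" using c by (simp add: mvadjM proj_smul)
    ultimately show ?thesis by (simp add: e)
  qed
  have 3: "proj V \<noteq> Some \<i>"
  proof
    assume "proj V = Some \<i>"
    then have "v1 \<noteq> 0" "\<i> = of_real (v2 / (- v1))" by (auto simp: proj_def V_def split: if_splits)
    then have "Im \<i> = 0" by (metis Im_complex_of_real)
    then show False by simp
  qed
  show ?thesis using r(1) 1 2 3 by blast
qed

lemma pair:
  assumes F: "holomorphic_on_G F"
    and inv: "\<forall>A\<in>\<Gamma>. \<forall>p\<in>G_dom. F (moebius_act A (fst p), moebius_act A (snd p)) = F p"
    and PG: "\<And>n. P n \<in> \<Gamma>" and PQ: "\<And>n. moebius_act (P n) (moebius_act (Q n) q) = q"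
    and cz: "sconv (\<lambda>n. moebius_act (P n) z) X" and cq: "sconv (\<lambda>n. moebius_act (Q n) q) Y"
    and zY: "z \<noteq> Y" and qX: "q \<noteq> X"
  shows "F (z, Y) = F (X, q)"
proof -
  define w where "w n = moebius_act (Q n) q" for n
  have ev: "eventually (\<lambda>n. w n \<noteq> z) sequentially"
    using sconv_neq[OF cq] zY unfolding w_def by metis
  have "eventually (\<lambda>n. F (z, w n) = F (moebius_act (P n) z, q)) sequentially"
  proof (rule eventually_mono[OF ev])
    fix n assume "w n \<noteq> z"
    then have "(z, w n) \<in> G_dom" by (auto simp: G_dom_def)
    then have "F (moebius_act (P n) z, moebius_act (P n) (w n)) = F (z, w n)"
      using inv PG[of n] by (auto dest!: bspec[of _ _ "(z, w n)"])
    then show "F (z, w n) = F (moebius_act (P n) z, q)" using PQ by (simp add: w_def)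
  qed
  moreover have "((\<lambda>n. F (z, w n)) \<longlongrightarrow> F (z, Y)) sequentially"
    by (rule F_cont[OF F _ sconv_const]) (use zY cq in \<open>auto simp: G_dom_def w_def\<close>)
  ultimately have "((\<lambda>n. F (moebius_act (P n) z, q)) \<longlongrightarrow> F (z, Y)) sequentially"
    by (rule Lim_transform_eventually[rotated])
  moreover have "((\<lambda>n. F (moebius_act (P n) z, q)) \<longlongrightarrow> F (X, q)) sequentially"
    by (rule F_cont[OF F _ cz sconv_const]) (use qX in \<open>auto simp: G_dom_def\<close>)
  ultimately show ?thesis by (rule LIMSEQ_unique)
qed

lemma limpt_seq:
  assumes "l \<in> limit_set \<Gamma>"
  shows "\<exists>f. (\<forall>n. f n \<in> orbit_i \<Gamma>) \<and> (\<forall>v. finite {n. f n = v}) \<and> sconv (\<lambda>n. Some (f n)) l"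
proof (cases l)
  case (Some x)
  then have "x islimpt orbit_i \<Gamma>" using assms by (auto simp: limit_set_def split: if_splits)
  then obtain f where f: "\<And>n. f n \<in> orbit_i \<Gamma> - {x}" "(f \<longlongrightarrow> x) sequentially"
    unfolding islimpt_sequential by blast
  have fin: "finite {n. f n = v}" for v
  proof (cases "v = x")
    case True then show ?thesis using f(1) by auto
  next
    case False
    then have "eventually (\<lambda>n. f n \<noteq> v) sequentially"
      using tendsto_imp_eventually_ne[OF f(2)] by metis
    then show ?thesis unfolding cofinite_eq_sequentially[symmetric] eventually_cofinite by simp
  qed
  have "sconv (\<lambda>n. Some (f n)) l" using f(2) by (simp add: Some sconv_def ch_def excl_def)
  then show ?thesis using f(1) fin by blast
next
  case None
  then have "\<not> bounded (orbit_i \<Gamma>)" using assms by (auto simp: limit_set_def split: if_splits)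
  then have "\<forall>n::nat. \<exists>z\<in>orbit_i \<Gamma>. real n < norm z" unfolding bounded_iff by (meson not_le)
  then obtain f where f: "\<And>n. f n \<in> orbit_i \<Gamma>" "\<And>n. real n < norm (f n)" by metis
  have fin: "finite {n. f n = v}" for v
  proof -
    have "{n. f n = v} \<subseteq> {n. real n < norm v}" using f(2) by auto
    moreover have "finite {n::nat. real n < norm v}"
      by (rule finite_subset[of _ "{..<nat \<lceil>norm v\<rceil>}"]) (auto simp: zless_nat_eq_int_zless less_ceiling_iff)
    ultimately show ?thesis by (rule finite_subset)
  qed
  have nz: "f n \<noteq> 0" for n using f(2)[of n] by auto
  have "filterlim (\<lambda>n. norm (f n)) at_top sequentially"
    by (rule filterlim_at_top_mono[OF filterlim_real_sequentially]) (use f(2) in \<open>auto intro!: always_eventually less_imp_le\<close>)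
  then have "((\<lambda>n. inverse (norm (f n))) \<longlongrightarrow> 0) sequentially" by (rule tendsto_inverse_0_at_top)
  then have "((\<lambda>n. norm (1 / f n)) \<longlongrightarrow> 0) sequentially" by (simp add: norm_inverse divide_inverse)
  then have "((\<lambda>n. 1 / f n) \<longlongrightarrow> 0) sequentially" by (rule tendsto_norm_zero_cancel)
  then have "sconv (\<lambda>n. Some (f n)) l" using nz by (simp add: None sconv_def ch_def excl_def)
  then show ?thesis using f(1) fin by blast
qed

lemma point_data:
  assumes G: "fuchsian \<Gamma>" and F: "holomorphic_on_G F"
    and inv: "\<forall>A\<in>\<Gamma>. \<forall>p\<in>G_dom. F (moebius_act A (fst p), moebius_act A (snd p)) = F p"
    and l: "l \<in> limit_set \<Gamma>"
  shows "\<exists>B Y. (\<forall>n. B n \<in> \<Gamma>) \<and> (\<forall>z. z \<noteq> Y \<longrightarrow> sconv (\<lambda>n. moebius_act (B n) z) l)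
      \<and> (\<forall>z q. z \<noteq> Y \<longrightarrow> q \<noteq> l \<longrightarrow> F (z, Y) = F (l, q))
      \<and> (\<forall>z q. z \<noteq> l \<longrightarrow> q \<noteq> Y \<longrightarrow> F (z, l) = F (Y, q))"
proof -
  obtain f where f: "\<And>n. f n \<in> orbit_i \<Gamma>" "\<And>v. finite {n. f n = v}" "sconv (\<lambda>n. Some (f n)) l"
    using limpt_seq[OF l] by blast
  have "\<forall>n. \<exists>A. A \<in> \<Gamma> \<and> moebius_act A (Some \<i>) = Some (f n)"
    using f(1) by (auto simp: orbit_i_def)
  then obtain A where A: "\<And>n. A n \<in> \<Gamma>" "\<And>n. moebius_act (A n) (Some \<i>) = Some (f n)" by metis
  have fib: "finite {n. A n = B}" for B
  proof -
    have "{n. A n = B} \<subseteq> {n. f n = the (moebius_act B (Some \<i>))}" using A(2) by force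
    then show ?thesis using f(2) by (rule finite_subset)
  qed
  obtain r X Y where r: "strict_mono r" "\<And>z. z \<noteq> Y \<Longrightarrow> sconv (\<lambda>n. moebius_act (A (r n)) z) X"
    "\<And>q. q \<noteq> X \<Longrightarrow> sconv (\<lambda>n. moebius_act (adj2 (A (r n))) q) Y" "Y \<noteq> Some \<i>"
    using dynamics[OF G A(1) fib] by blast
  have "sconv (\<lambda>n. moebius_act (A (r n)) (Some \<i>)) X" using r(2) r(4) by metis
  moreover have "sconv (\<lambda>n. moebius_act (A (r n)) (Some \<i>)) l"
    using sconv_subseq[OF r(1) f(3)] by (simp add: A(2) o_def)
  ultimately have Xl: "X = l" by (rule sconv_unique)
  have d: "det (A n) = 1" for n using fuchsian_det[OF G A(1)] .
  have p1: "F (z, Y) = F (l, q)" if "z \<noteq> Y" "q \<noteq> l" for z q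
    by (rule pair[OF F inv, of "\<lambda>n. A (r n)" "\<lambda>n. adj2 (A (r n))"])
       (use A(1) act_inv(1)[OF d] r(2,3) that Xl in auto)
  have p2: "F (z, l) = F (Y, q)" if "z \<noteq> l" "q \<noteq> Y" for z q
    by (rule pair[OF F inv, of "\<lambda>n. adj2 (A (r n))" "\<lambda>n. A (r n)"])
       (use fuchsian_adj[OF G A(1)] act_inv(2)[OF d] r(2,3) that Xl in auto)
  show ?thesis
    by (rule exI[of _ "\<lambda>n. A (r n)"], rule exI[of _ Y]) (use A(1) r(2) Xl p1 p2 in auto)
qed

lemma slice_holo:
  assumes F: "holomorphic_on_G F"
  shows "(\<lambda>w. F (sphere_chart a \<zeta>, sphere_chart b w)) holomorphic_on {w. sphere_chart b w \<noteq> sphere_chart a \<zeta>}"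
  unfolding holomorphic_on_def field_differentiable_def
proof
  fix w assume w: "w \<in> {w. sphere_chart b w \<noteq> sphere_chart a \<zeta>}"
  define g where "g = (\<lambda>(z, w). F (sphere_chart a z, sphere_chart b w))"
  have "holomorphic2_on g {(z, w). (sphere_chart a z, sphere_chart b w) \<in> G_dom}"
    unfolding g_def by (rule F[unfolded holomorphic_on_G_def, rule_format, of a b])
  moreover have "(\<zeta>, w) \<in> {(z, w). (sphere_chart a z, sphere_chart b w) \<in> G_dom}"
    using w by (auto simp: G_dom_def)
  ultimately obtain c1 c2 where d: "(g has_derivative (\<lambda>(u, v). c1 * u + c2 * v)) (at (\<zeta>, w))"
    unfolding holomorphic2_on_def by blast
  have "((\<lambda>w. (\<zeta>, w)) has_derivative (\<lambda>h. (0, h))) (at w)"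
    by (intro derivative_eq_intros) auto
  from has_derivative_compose[OF this d]
  have "((\<lambda>w. g (\<zeta>, w)) has_derivative (\<lambda>h. c2 * h)) (at w)" by simp
  then have "((\<lambda>w. F (sphere_chart a \<zeta>, sphere_chart b w)) has_field_derivative c2) (at w)"
    unfolding has_field_derivative_def by (simp add: g_def)
  then show "\<exists>f'. ((\<lambda>w. F (sphere_chart a \<zeta>, sphere_chart b w)) has_field_derivative f')
       (at w within {w. sphere_chart b w \<noteq> sphere_chart a \<zeta>})"
    using has_field_derivative_at_within by blast
qed

lemma slice_set:
  "open {w. sphere_chart b w \<noteq> p} \<and> connected {w. sphere_chart b w \<noteq> p}"
proof -
  have T: "{w. sphere_chart b w = p} \<subseteq> {cinv b p}" by (auto simp: cinv_chart)
  then have fin: "finite {w. sphere_chart b w = p}" by (rule finite_subset) simp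
  have eq: "{w. sphere_chart b w \<noteq> p} = UNIV - {w. sphere_chart b w = p}" by auto
  show ?thesis unfolding eq
    by (intro conjI open_Diff connected_open_diff_countable finite_imp_closed countable_finite fin)
       (auto simp: DIM_complex)
qed

lemma continue_slice:
  assumes F: "holomorphic_on_G F"
    and xi: "\<xi> \<in> {w. sphere_chart b w \<noteq> sphere_chart a \<zeta>}"
    and lim: "\<xi> islimpt {w \<in> {w. sphere_chart b w \<noteq> sphere_chart a \<zeta>}. F (sphere_chart a \<zeta>, sphere_chart b w) = c}"
    and w: "sphere_chart b w \<noteq> sphere_chart a \<zeta>"
  shows "F (sphere_chart a \<zeta>, sphere_chart b w) = c"
proof -
  have "(\<lambda>w. F (sphere_chart a \<zeta>, sphere_chart b w) - c) w = 0"
    by (rule analytic_continuation[OF _ conjunct1[OF slice_set] conjunct2[OF slice_set] _ xi lim])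
       (use w in \<open>auto intro!: holomorphic_intros slice_holo[OF F]\<close>)
  then show ?thesis by simp
qed

lemma ident:
  assumes F: "holomorphic_on_G F" and wx: "\<And>n. w n \<noteq> x" and sw: "sconv w x" and xz: "x \<noteq> z0"
    and wc: "\<And>n. w n \<noteq> z0 \<Longrightarrow> F (z0, w n) = c"
    and w0: "w0 \<noteq> z0"
  shows "F (z0, w0) = c"
proof -
  define a where "a = ch z0"
  define \<zeta> where "\<zeta> = cinv a z0"
  have z0: "sphere_chart a \<zeta> = z0" unfolding \<zeta>_def a_def by (rule chart_cinv[OF ch_not_excl])
  define b where "b = ch x"
  have xb: "sphere_chart b (cinv b x) = x" unfolding b_def by (rule chart_cinv[OF ch_not_excl])
  have step1: "F (z0, sphere_chart b v) = c" if v: "sphere_chart b v \<noteq> z0" for v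
  proof -
    let ?S = "{w. sphere_chart b w \<noteq> sphere_chart a \<zeta>}"
    let ?U = "{w \<in> ?S. F (sphere_chart a \<zeta>, sphere_chart b w) = c}"
    have xi: "cinv b x \<in> ?S" unfolding mem_Collect_eq xb z0 using xz .
    have lim: "cinv b x islimpt ?U"
      unfolding islimpt_def
    proof (intro allI impI)
      fix T assume T: "cinv b x \<in> T" "open T"
      have "((\<lambda>n. cinv b (w n)) \<longlongrightarrow> cinv b x) sequentially"
        using sw unfolding sconv_def b_def by blast
      then have e1: "eventually (\<lambda>n. cinv b (w n) \<in> T) sequentially"
        by (rule topological_tendstoD[OF _ T(2) T(1)])
      have e2: "eventually (\<lambda>n. w n \<noteq> excl b) sequentially"
        using sw unfolding sconv_def b_def by blast
      have e3: "eventually (\<lambda>n. w n \<noteq> z0) sequentially"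
        using sconv_neq[OF sw, of z0] xz by simp
      have "eventually (\<lambda>n. cinv b (w n) \<in> T \<and> w n \<noteq> excl b \<and> w n \<noteq> z0) sequentially"
        using e1 e2 e3 by (intro eventually_conj)
      then obtain N where "\<forall>n\<ge>N. cinv b (w n) \<in> T \<and> w n \<noteq> excl b \<and> w n \<noteq> z0"
        unfolding eventually_sequentially by blast
      then obtain n where n: "cinv b (w n) \<in> T" "w n \<noteq> excl b" "w n \<noteq> z0" by blast
      have ch: "sphere_chart b (cinv b (w n)) = w n" using chart_cinv[OF n(2)] .
      have "cinv b (w n) \<in> ?U" using n(3) wc[of n] by (simp add: ch z0)
      moreover have "cinv b (w n) \<noteq> cinv b x"
      proof
        assume "cinv b (w n) = cinv b x"
        then have "sphere_chart b (cinv b (w n)) = sphere_chart b (cinv b x)" by simp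
        then show False using ch xb wx[of n] by simp
      qed
      ultimately show "\<exists>y\<in>?U. y \<in> T \<and> y \<noteq> cinv b x" using n(1) by blast
    qed
    show ?thesis using continue_slice[OF F xi lim, of v] v z0 by simp
  qed
  have step2: "F (z0, sphere_chart (\<not> b) v) = c" if v: "sphere_chart (\<not> b) v \<noteq> z0" for v
  proof -
    let ?S = "{w. sphere_chart (\<not> b) w \<noteq> sphere_chart a \<zeta>}"
    let ?U = "{w \<in> ?S. F (sphere_chart a \<zeta>, sphere_chart (\<not> b) w) = c}"
    have sub: "?S - {0} \<subseteq> ?U"
    proof
      fix u assume u: "u \<in> ?S - {0}"
      have "sphere_chart (\<not> b) u \<noteq> excl b"
      proof
        assume "sphere_chart (\<not> b) u = excl b"
        then have "cinv (\<not> b) (sphere_chart (\<not> b) u) = cinv (\<not> b) (sphere_chart (\<not> b) 0)"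
          by (simp add: excl_chart)
        then show False using u by simp
      qed
      then have "sphere_chart b (cinv b (sphere_chart (\<not> b) u)) = sphere_chart (\<not> b) u"
        by (rule chart_cinv)
      then show "u \<in> ?U" using step1[of "cinv b (sphere_chart (\<not> b) u)"] u z0 by simp
    qed
    have opn: "open (?S - {0})" using slice_set by (intro open_Diff) auto
    obtain \<xi> where xi: "\<xi> \<notin> {cinv (\<not> b) (sphere_chart a \<zeta>), 0}"
      using ex_new_if_finite[OF infinite_UNIV_char_0, of "{cinv (\<not> b) (sphere_chart a \<zeta>), 0}"] by auto
    have "sphere_chart (\<not> b) \<xi> \<noteq> sphere_chart a \<zeta>"
    proof
      assume "sphere_chart (\<not> b) \<xi> = sphere_chart a \<zeta>"
      then have "cinv (\<not> b) (sphere_chart (\<not> b) \<xi>) = cinv (\<not> b) (sphere_chart a \<zeta>)" by simp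
      then show False using xi by simp
    qed
    then have xiS: "\<xi> \<in> ?S - {0}" using xi by simp
    have "\<xi> islimpt (?S - {0})" using xiS opn by (intro interior_limit_point) (simp add: interior_open)
    then have lim: "\<xi> islimpt ?U" using sub by (rule islimpt_subset)
    show ?thesis using continue_slice[OF F _ lim, of v] xiS v z0 by simp
  qed
  show ?thesis
  proof (cases "w0 = excl b")
    case True
    then have "w0 = sphere_chart (\<not> b) 0" by (simp add: excl_chart)
    then show ?thesis using step2[of 0] w0 by simp
  next
    case False
    then have "w0 = sphere_chart b (cinv b w0)" by (simp add: chart_cinv)
    then show ?thesis using step1[of "cinv b w0"] w0 by simp
  qed
qed

lemma three_points:
  assumes "\<not> (finite S \<and> card S \<le> 2)"
  shows "\<exists>a b c. a \<in> S \<and> b \<in> S \<and> c \<in> S \<and> a \<noteq> b \<and> a \<noteq> c \<and> b \<noteq> c"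
proof -
  obtain T where T: "T \<subseteq> S" "card T = 3"
  proof (cases "finite S")
    case True
    then have "3 \<le> card S" using assms by simp
    then show ?thesis using obtain_subset_with_card_n that by metis
  next
    case False
    then show ?thesis using infinite_arbitrarily_large that by metis
  qed
  then obtain x y z where "T = {x, y, z}" "x \<noteq> y" "y \<noteq> z" "x \<noteq> z" unfolding card_3_iff by blast
  then show ?thesis using T(1) by blast
qed

lemma other_point: "\<exists>z::csphere. z \<noteq> Y"
  by (cases Y) auto

lemma rowcol:
  assumes G: "fuchsian \<Gamma>" and F: "holomorphic_on_G F"
    and inv: "\<forall>A\<in>\<Gamma>. \<forall>p\<in>G_dom. F (moebius_act A (fst p), moebius_act A (snd p)) = F p"
    and l: "l \<in> limit_set \<Gamma>"
  shows "\<exists>B Y. (\<forall>n. B n \<in> \<Gamma>) \<and> (\<forall>z. z \<noteq> Y \<longrightarrow> sconv (\<lambda>n. moebius_act (B n) z) l)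
      \<and> (\<forall>q q'. q \<noteq> l \<longrightarrow> q' \<noteq> l \<longrightarrow> F (l, q) = F (l, q'))
      \<and> (\<forall>z z'. z \<noteq> l \<longrightarrow> z' \<noteq> l \<longrightarrow> F (z, l) = F (z', l))"
proof -
  obtain B Y where BY: "\<forall>n. B n \<in> \<Gamma>" "\<forall>z. z \<noteq> Y \<longrightarrow> sconv (\<lambda>n. moebius_act (B n) z) l"
      "\<forall>z q. z \<noteq> Y \<longrightarrow> q \<noteq> l \<longrightarrow> F (z, Y) = F (l, q)"
      "\<forall>z q. z \<noteq> l \<longrightarrow> q \<noteq> Y \<longrightarrow> F (z, l) = F (Y, q)"
    using point_data[OF G F inv l] by blast
  obtain z0 where z0: "z0 \<noteq> Y" using other_point by blast
  have "\<forall>q q'. q \<noteq> l \<longrightarrow> q' \<noteq> l \<longrightarrow> F (l, q) = F (l, q')"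
    using BY(3) z0 by metis
  moreover have "\<forall>z z'. z \<noteq> l \<longrightarrow> z' \<noteq> l \<longrightarrow> F (z, l) = F (z', l)"
    using BY(4) z0 by metis
  ultimately show ?thesis using BY(1,2) by blast
qed

theorem mainTheorem11:
  fixes \<Gamma> :: "(real^2^2) set" and F :: "csphere \<times> csphere \<Rightarrow> complex"
  assumes "fuchsian \<Gamma>" and "non_elementary \<Gamma>"
    and "holomorphic_on_G F"
    and "\<forall>A\<in>\<Gamma>. \<forall>p\<in>G_dom. F (moebius_act A (fst p), moebius_act A (snd p)) = F p"
  shows "\<exists>c. \<forall>p\<in>G_dom. F p = c"
proof -
  note G = assms(1) and F = assms(3) and inv = assms(4)
  obtain l1 l2 l3 where L: "l1 \<in> limit_set \<Gamma>" "l2 \<in> limit_set \<Gamma>" "l3 \<in> limit_set \<Gamma>"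
      and d: "l1 \<noteq> l2" "l1 \<noteq> l3" "l2 \<noteq> l3"
    using three_points assms(2) unfolding non_elementary_def by metis
  obtain B Y where B: "\<And>n. B n \<in> \<Gamma>" "\<And>z. z \<noteq> Y \<Longrightarrow> sconv (\<lambda>n. moebius_act (B n) z) l1"
      and R1: "\<And>q q'. q \<noteq> l1 \<Longrightarrow> q' \<noteq> l1 \<Longrightarrow> F (l1, q) = F (l1, q')"
      and C1: "\<And>z z'. z \<noteq> l1 \<Longrightarrow> z' \<noteq> l1 \<Longrightarrow> F (z, l1) = F (z', l1)"
    using rowcol[OF G F inv L(1)] by blast
  have R2: "\<And>q q'. q \<noteq> l2 \<Longrightarrow> q' \<noteq> l2 \<Longrightarrow> F (l2, q) = F (l2, q')"
      and C2: "\<And>z z'. z \<noteq> l2 \<Longrightarrow> z' \<noteq> l2 \<Longrightarrow> F (z, l2) = F (z', l2)"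
    using rowcol[OF G F inv L(2)] by blast+
  have R3: "\<And>q q'. q \<noteq> l3 \<Longrightarrow> q' \<noteq> l3 \<Longrightarrow> F (l3, q) = F (l3, q')"
      and C3: "\<And>z z'. z \<noteq> l3 \<Longrightarrow> z' \<noteq> l3 \<Longrightarrow> F (z, l3) = F (z', l3)"
    using rowcol[OF G F inv L(3)] by blast+
  define c where "c = F (l1, l2)"
  define V where "V = {v. (\<forall>q. q \<noteq> v \<longrightarrow> F (v, q) = c) \<and> (\<forall>z. z \<noteq> v \<longrightarrow> F (z, v) = c)}"
  have r1: "F (l1, q) = c" if "q \<noteq> l1" for q using R1[of q l2] that d by (simp add: c_def)
  have c2: "F (z, l2) = c" if "z \<noteq> l2" for z using C2[of z l1] that d by (simp add: c_def)
  have c3: "F (z, l3) = c" if "z \<noteq> l3" for z using C3[of z l1] r1[of l3] that d by simp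
  have r2: "F (l2, q) = c" if "q \<noteq> l2" for q using R2[of q l3] c3[of l2] that d by simp
  have r3: "F (l3, q) = c" if "q \<noteq> l3" for q using R3[of q l2] c2[of l3] that d by simp
  have c1: "F (z, l1) = c" if "z \<noteq> l1" for z using C1[of z l2] r2[of l1] that d by simp
  have V123: "l1 \<in> V" "l2 \<in> V" "l3 \<in> V" unfolding V_def using r1 r2 r3 c1 c2 c3 by blast+
  have Vinv: "moebius_act A v \<in> V" if A: "A \<in> \<Gamma>" and v: "v \<in> V" for A v
  proof -
    have dA: "det A = 1" using fuchsian_det[OF G A] .
    have invA: "F (moebius_act A x, moebius_act A y) = F (x, y)" if "x \<noteq> y" for x y
      using inv A that by (auto simp: G_dom_def dest!: bspec[of _ _ A] bspec[of _ _ "(x, y)"])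
    have 1: "F (moebius_act A v, q) = c" if q: "q \<noteq> moebius_act A v" for q
    proof -
      have ne: "v \<noteq> moebius_act (adj2 A) q" using q act_inv(1)[OF dA, of q] by metis
      have "F (moebius_act A v, q) = F (moebius_act A v, moebius_act A (moebius_act (adj2 A) q))"
        using act_inv(1)[OF dA] by simp
      also have "\<dots> = F (v, moebius_act (adj2 A) q)" using invA[OF ne] .
      also have "\<dots> = c" using v ne unfolding V_def by auto
      finally show ?thesis .
    qed
    have 2: "F (z, moebius_act A v) = c" if z: "z \<noteq> moebius_act A v" for z
    proof -
      have ne: "moebius_act (adj2 A) z \<noteq> v" using z act_inv(1)[OF dA, of z] by metis
      have "F (z, moebius_act A v) = F (moebius_act A (moebius_act (adj2 A) z), moebius_act A v)"
        using act_inv(1)[OF dA] by simp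
      also have "\<dots> = F (moebius_act (adj2 A) z, v)" using invA[OF ne] .
      also have "\<dots> = c" using v ne unfolding V_def by blast
      finally show ?thesis .
    qed
    show ?thesis unfolding V_def using 1 2 by blast
  qed
  obtain p p' where pp: "p \<in> V" "p' \<in> V" "p \<noteq> Y" "p' \<noteq> Y" "p \<noteq> p'"
  proof (cases "Y = l1")
    case True then show ?thesis using that[of l2 l3] V123 d by auto
  next
    case F1: False
    show ?thesis
    proof (cases "Y = l2")
      case True then show ?thesis using that[of l1 l3] V123 d F1 by auto
    next
      case False then show ?thesis using that[of l1 l2] V123 d F1 by auto
    qed
  qed
  define w where "w n = (if moebius_act (B n) p \<noteq> l1 then moebius_act (B n) p else moebius_act (B n) p')" for n
  have wV: "w n \<in> V" for n unfolding w_def using Vinv[OF B(1) pp(1)] Vinv[OF B(1) pp(2)] by simp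
  have wl: "w n \<noteq> l1" for n
  proof -
    have dB: "det (B n) = 1" using fuchsian_det[OF G B(1)] .
    have "moebius_act (B n) p \<noteq> moebius_act (B n) p'"
    proof
      assume "moebius_act (B n) p = moebius_act (B n) p'"
      then have "moebius_act (adj2 (B n)) (moebius_act (B n) p) = moebius_act (adj2 (B n)) (moebius_act (B n) p')"
        by simp
      then show False using act_inv(2)[OF dB] pp(5) by simp
    qed
    then show ?thesis unfolding w_def by auto
  qed
  have sw: "sconv w l1" unfolding w_def by (rule sconv_if) (use B(2) pp in auto)
  have "F q = c" if q: "q \<in> G_dom" for q
  proof -
    obtain z0 w0 where q0: "q = (z0, w0)" "z0 \<noteq> w0" using q by (cases q) (auto simp: G_dom_def)
    show ?thesis
    proof (cases "z0 \<in> V")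
      case True then show ?thesis using q0 unfolding V_def by auto
    next
      case False
      then have "l1 \<noteq> z0" using V123 by auto
      moreover have "F (z0, w n) = c" if "w n \<noteq> z0" for n using wV[of n] that unfolding V_def by auto
      ultimately have "F (z0, w0) = c" using ident[OF F wl sw] q0(2) by metis
      then show ?thesis using q0 by simp
    qed
  qed
  then show ?thesis by blast
qed

end
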